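(* Let $X,Y$ be countable discrete metric spaces, $d\in D(X,Y)$, $d'\in D(Y,X)$, and suppose $M_{d'\circ d}(X,X)=M_{d^0}(X,X)$ $(=C^*_u(X))$. Then there exists an almost isometry $f:X\to Y$ such that $d$ and $d_f$ are almost isometric, i.e. $\sup_{x\in X,y\in Y}|d(x,y)-d_f(x,y)|<\infty$.
   Context: $D(X,Y)$: metrics on $X\sqcup Y$ extending $d_X,d_Y$. $(d'\circ d)$ is the function on $X\sqcup X'$ ($X'$ a second copy of $X$) given by $d_X$ on each copy and $(d'\circ d)(x_1,x_2')=\inf_{y\in Y}(d(x_1,y)+d'(y,x_2'))$. For such a function $\rho$, $M_\rho(X,X)$ is the norm closure of bounded operators $T$ on $l^2(X)$ for which there is $L$ with $\langle T\delta_{x_1},\delta_{x_2}\rangle=0$ whenever $\rho(x_1,x_2')\ge L$. $d^0(x_1,x_2')=d_X(x_1,x_2)+1$. An almost isometry $f:X\to Y$ satisfies $d_X(x,x')-C\le d_Y(f(x),f(x'))\le d_X(x,x')+C$ for some $C>0$; $d_f(x,y)=\inf_{\tilde x\in X}(d_X(x,\tilde x)+C/2+d_Y(f(\tilde x),y))$. *)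

theory Defs
  imports "HOL-Analysis.Analysis"
begin

definition is_metric :: "'a set \<Rightarrow> ('a \<Rightarrow> 'a \<Rightarrow> real) \<Rightarrow> bool" where
  "is_metric S m \<longleftrightarrow>
     (\<forall>x\<in>S. \<forall>y\<in>S. 0 \<le> m x y \<and> (m x y = 0 \<longleftrightarrow> x = y) \<and> m x y = m y x) \<and>
     (\<forall>x\<in>S. \<forall>y\<in>S. \<forall>z\<in>S. m x z \<le> m x y + m y z)"

definition discrete_metric :: "('a \<Rightarrow> 'a \<Rightarrow> real) \<Rightarrow> bool" where
  "discrete_metric m \<longleftrightarrow> (\<forall>x. \<exists>e>0. \<forall>y. y \<noteq> x \<longrightarrow> e \<le> m x y)"

fun glue :: "('a \<Rightarrow> 'a \<Rightarrow> real) \<Rightarrow> ('b \<Rightarrow> 'b \<Rightarrow> real) \<Rightarrow> ('a \<Rightarrow> 'b \<Rightarrow> real)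
              \<Rightarrow> ('a + 'b) \<Rightarrow> ('a + 'b) \<Rightarrow> real" where
  "glue dX dY d (Inl x) (Inl x') = dX x x'"
| "glue dX dY d (Inr y) (Inr y') = dY y y'"
| "glue dX dY d (Inl x) (Inr y) = d x y"
| "glue dX dY d (Inr y) (Inl x) = d x y"

text \<open>D(X,Y): metrics on X \<sqcup> Y extending d_X and d_Y, represented by their cross part.\<close>
definition DXY :: "('a \<Rightarrow> 'a \<Rightarrow> real) \<Rightarrow> ('b \<Rightarrow> 'b \<Rightarrow> real) \<Rightarrow> ('a \<Rightarrow> 'b \<Rightarrow> real) set" where
  "DXY dX dY = {d. is_metric UNIV (glue dX dY d)}"

text \<open>Cross part of d' \<circ> d on X \<sqcup> X'.\<close>
definition compose_metric :: "('b \<Rightarrow> 'a \<Rightarrow> real) \<Rightarrow> ('a \<Rightarrow> 'b \<Rightarrow> real) \<Rightarrow> 'a \<Rightarrow> 'a \<Rightarrow> real" where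
  "compose_metric d' d x1 x2 = (INF y. d x1 y + d' y x2)"

definition d0 :: "('a \<Rightarrow> 'a \<Rightarrow> real) \<Rightarrow> 'a \<Rightarrow> 'a \<Rightarrow> real" where
  "d0 dX x1 x2 = dX x1 x2 + 1"

text \<open>Bounded operators on l^2(X) are represented by their matrix entries
  m x1 x2 = \<langle>T \<delta>_x1, \<delta>_x2\<rangle>. opnorm_le m c says the operator norm is at most c,
  tested on finitely supported vectors (which are dense in l^2(X)).\<close>
definition opnorm_le :: "('a \<Rightarrow> 'a \<Rightarrow> complex) \<Rightarrow> real \<Rightarrow> bool" where
  "opnorm_le m c \<longleftrightarrow>
     (\<forall>F G (v::'a \<Rightarrow> complex) (w::'a \<Rightarrow> complex). finite F \<longrightarrow> finite G \<longrightarrow>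
        (\<Sum>x\<in>F. (cmod (v x))\<^sup>2) \<le> 1 \<longrightarrow> (\<Sum>x\<in>G. (cmod (w x))\<^sup>2) \<le> 1 \<longrightarrow>
        cmod (\<Sum>x1\<in>F. \<Sum>x2\<in>G. m x1 x2 * v x1 * cnj (w x2)) \<le> c)"

definition bounded_op :: "('a \<Rightarrow> 'a \<Rightarrow> complex) \<Rightarrow> bool" where
  "bounded_op m \<longleftrightarrow> (\<exists>c. opnorm_le m c)"

definition finite_prop :: "('a \<Rightarrow> 'a \<Rightarrow> real) \<Rightarrow> ('a \<Rightarrow> 'a \<Rightarrow> complex) \<Rightarrow> bool" where
  "finite_prop \<rho> m \<longleftrightarrow> (\<exists>L. \<forall>x1 x2. \<rho> x1 x2 \<ge> L \<longrightarrow> m x1 x2 = 0)"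

definition M_alg :: "('a \<Rightarrow> 'a \<Rightarrow> real) \<Rightarrow> ('a \<Rightarrow> 'a \<Rightarrow> complex) set" where
  "M_alg \<rho> = {m. bounded_op m \<and>
      (\<forall>e>0. \<exists>s. bounded_op s \<and> finite_prop \<rho> s \<and> opnorm_le (\<lambda>x1 x2. m x1 x2 - s x1 x2) e)}"

definition almost_isometry :: "('a \<Rightarrow> 'a \<Rightarrow> real) \<Rightarrow> ('b \<Rightarrow> 'b \<Rightarrow> real) \<Rightarrow> ('a \<Rightarrow> 'b) \<Rightarrow> real \<Rightarrow> bool" where
  "almost_isometry dX dY f C \<longleftrightarrow> C > 0 \<and>
     (\<forall>x x'. dX x x' - C \<le> dY (f x) (f x') \<and> dY (f x) (f x') \<le> dX x x' + C)"

definition d_f :: "('a \<Rightarrow> 'a \<Rightarrow> real) \<Rightarrow> ('b \<Rightarrow> 'b \<Rightarrow> real) \<Rightarrow> ('a \<Rightarrow> 'b) \<Rightarrow> real \<Rightarrow> 'a \<Rightarrow> 'b \<Rightarrow> real" where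
  "d_f dX dY f C x y = (INF x'. dX x x' + C / 2 + dY (f x') y)"

end

theory Submission
  imports Defs
begin

lemma glue_facts:
  assumes "d \<in> DXY dX dY"
  shows "\<And>x y. 0 \<le> d x y"
    and "\<And>x y y'. dY y y' \<le> d x y + d x y'"
    and "\<And>x x' y. d x y \<le> dX x x' + d x' y"
    and "\<And>x y y'. d x y \<le> d x y' + dY y' y"
    and "\<And>x x' y. dX x x' \<le> d x y + d x' y"
proof -
  have m: "is_metric UNIV (glue dX dY d)" using assms by (simp add: DXY_def)
  have tri: "\<And>a b c. glue dX dY d a c \<le> glue dX dY d a b + glue dX dY d b c"
    using m unfolding is_metric_def by blast
  have nn: "\<And>a b. 0 \<le> glue dX dY d a b"
    using m unfolding is_metric_def by blast
  show "\<And>x y. 0 \<le> d x y" using nn by (metis glue.simps(3))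
  show "dY y y' \<le> d x y + d x y'" for x y y' using tri[where a="Inr y" and b="Inl x" and c="Inr y'"] by simp
  show "d x y \<le> dX x x' + d x' y" for x x' y using tri[where a="Inl x" and b="Inl x'" and c="Inr y"] by simp
  show "d x y \<le> d x y' + dY y' y" for x y y' using tri[where a="Inl x" and b="Inr y'" and c="Inr y"] by simp
  show "dX x x' \<le> d x y + d x' y" for x x' y using tri[where a="Inl x" and b="Inr y" and c="Inl x'"] by simp
qed

definition idm :: "'a \<Rightarrow> 'a \<Rightarrow> complex" where
  "idm x1 x2 = (if x1 = x2 then 1 else 0)"

lemma idm_bounded: "opnorm_le idm 1"
  unfolding opnorm_le_def
proof (intro allI impI)
  fix F G :: "'a set" and v w :: "'a \<Rightarrow> complex"
  assume F: "finite F" and G: "finite G"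
    and v: "(\<Sum>x\<in>F. (cmod (v x))\<^sup>2) \<le> 1" and w: "(\<Sum>x\<in>G. (cmod (w x))\<^sup>2) \<le> 1"
  have inner: "(\<Sum>x2\<in>G. idm x1 x2 * v x1 * cnj (w x2)) = (if x1 \<in> G then v x1 * cnj (w x1) else 0)" for x1
  proof -
    have "(\<Sum>x2\<in>G. idm x1 x2 * v x1 * cnj (w x2)) = (\<Sum>x2\<in>G. if x1 = x2 then v x1 * cnj (w x2) else 0)"
      by (rule sum.cong) (auto simp: idm_def)
    then show ?thesis using G by simp
  qed
  have eq: "(\<Sum>x1\<in>F. \<Sum>x2\<in>G. idm x1 x2 * v x1 * cnj (w x2))
      = (\<Sum>x1\<in>F. if x1 \<in> G then v x1 * cnj (w x1) else 0)"
    by (simp only: inner)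
  also have "\<dots> = (\<Sum>x\<in>F \<inter> G. v x * cnj (w x))"
    using F by (simp add: sum.If_cases Int_commute)
  finally have "cmod (\<Sum>x1\<in>F. \<Sum>x2\<in>G. idm x1 x2 * v x1 * cnj (w x2))
       \<le> (\<Sum>x\<in>F \<inter> G. cmod (v x) * cmod (w x))"
    by (metis (no_types, lifting) norm_mult complex_mod_cnj norm_sum sum.cong)
  also have "\<dots> \<le> (\<Sum>x\<in>F \<inter> G. ((cmod (v x))\<^sup>2 + (cmod (w x))\<^sup>2) / 2)"
  proof (rule sum_mono)
    fix x
    have "0 \<le> (cmod (v x) - cmod (w x))\<^sup>2" by simp
    then show "cmod (v x) * cmod (w x) \<le> ((cmod (v x))\<^sup>2 + (cmod (w x))\<^sup>2) / 2"
      by (simp add: power2_eq_square algebra_simps)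
  qed
  also have "\<dots> = ((\<Sum>x\<in>F \<inter> G. (cmod (v x))\<^sup>2) + (\<Sum>x\<in>F \<inter> G. (cmod (w x))\<^sup>2)) / 2"
    by (simp add: sum_divide_distrib flip: sum.distrib)
  also have "\<dots> \<le> ((\<Sum>x\<in>F. (cmod (v x))\<^sup>2) + (\<Sum>x\<in>G. (cmod (w x))\<^sup>2)) / 2"
    using sum_mono2[OF F, of "F \<inter> G" "\<lambda>x. (cmod (v x))\<^sup>2"]
          sum_mono2[OF G, of "F \<inter> G" "\<lambda>x. (cmod (w x))\<^sup>2"] by auto
  also have "\<dots> \<le> 1" using v w by simp
  finally show "cmod (\<Sum>x1\<in>F. \<Sum>x2\<in>G. idm x1 x2 * v x1 * cnj (w x2)) \<le> 1" .
qed

lemma idm_in: assumes "\<And>x. dX x x = 0" shows "idm \<in> M_alg (d0 dX)"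
  unfolding M_alg_def
proof (safe)
  show "bounded_op idm" using idm_bounded unfolding bounded_op_def by blast
  fix e :: real assume e: "e > 0"
  have fp: "finite_prop (d0 dX) idm"
    unfolding finite_prop_def d0_def idm_def
    by (rule exI[of _ 2]) (auto simp: assms)
  have "opnorm_le (\<lambda>x1 x2. idm x1 x2 - idm x1 x2) e"
    using e by (simp add: opnorm_le_def)
  then show "\<exists>s. bounded_op s \<and> finite_prop (d0 dX) s \<and> opnorm_le (\<lambda>x1 x2. idm x1 x2 - s x1 x2) e"
    using fp idm_bounded unfolding bounded_op_def by blast
qed

theorem theorem4p2:
  fixes dX :: "'a::countable \<Rightarrow> 'a \<Rightarrow> real" and dY :: "'b::countable \<Rightarrow> 'b \<Rightarrow> real"
    and d :: "'a \<Rightarrow> 'b \<Rightarrow> real" and d' :: "'b \<Rightarrow> 'a \<Rightarrow> real"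
  assumes "is_metric UNIV dX" and "is_metric UNIV dY"
    and "discrete_metric dX" and "discrete_metric dY"
    and "d \<in> DXY dX dY" and "d' \<in> DXY dY dX"
    and "M_alg (compose_metric d' d) = M_alg (d0 dX)"
  shows "\<exists>f C. almost_isometry dX dY f C \<and>
           (\<exists>K. \<forall>x y. \<bar>d x y - d_f dX dY f C x y\<bar> \<le> K)"
proof -
  note g = glue_facts[OF assms(5)]
  have d'nn: "\<And>x y. 0 \<le> d' y x" using glue_facts(1)[OF assms(6)] .
  have dX0: "\<And>x. dX x x = 0" using assms(1) unfolding is_metric_def by blast
  have dYs: "\<And>y y'. dY y y' = dY y' y" using assms(2) unfolding is_metric_def by blast
  have dYnn: "\<And>y y'. 0 \<le> dY y y'" using assms(2) unfolding is_metric_def by blast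
  have dXnn: "\<And>x x'. 0 \<le> dX x x'" using assms(1) unfolding is_metric_def by blast
  have "idm \<in> M_alg (compose_metric d' d)" using idm_in[of dX, OF dX0] assms(7) by simp
  then have "\<forall>e>0. \<exists>s. bounded_op s \<and> finite_prop (compose_metric d' d) s \<and>
      opnorm_le (\<lambda>x1 x2. idm x1 x2 - s x1 x2) e"
    unfolding M_alg_def by blast
  then have "\<exists>s. bounded_op s \<and> finite_prop (compose_metric d' d) s \<and>
      opnorm_le (\<lambda>x1 x2. idm x1 x2 - s x1 x2) (1/2)" by simp
  then obtain s where fps: "finite_prop (compose_metric d' d) s"
    and ap: "opnorm_le (\<lambda>x1 x2. idm x1 x2 - s x1 x2) (1/2)" by blast
  have H: "\<And>F G (v::'a\<Rightarrow>complex) (w::'a\<Rightarrow>complex). finite F \<Longrightarrow> finite G \<Longrightarrow>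
        (\<Sum>x\<in>F. (cmod (v x))\<^sup>2) \<le> 1 \<Longrightarrow> (\<Sum>x\<in>G. (cmod (w x))\<^sup>2) \<le> 1 \<Longrightarrow>
        cmod (\<Sum>x1\<in>F. \<Sum>x2\<in>G. (idm x1 x2 - s x1 x2) * v x1 * cnj (w x2)) \<le> 1/2"
    using ap unfolding opnorm_le_def by blast
  obtain L where L: "\<And>x1 x2. compose_metric d' d x1 x2 \<ge> L \<Longrightarrow> s x1 x2 = 0"
    using fps unfolding finite_prop_def by blast
  have ex: "\<exists>y. d x y < L" for x
  proof -
    have "s x x \<noteq> 0"
    proof
      assume s0: "s x x = 0"
      have "cmod (\<Sum>x1\<in>{x}. \<Sum>x2\<in>{x}. (idm x1 x2 - s x1 x2) * (\<lambda>_. 1::complex) x1 * cnj ((\<lambda>_. 1::complex) x2)) \<le> 1/2"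
        by (rule H) auto
      then show False using s0 by (simp add: idm_def)
    qed
    then have "compose_metric d' d x x < L" by (meson L not_le)
    then have "(INF y. d x y + d' y x) < L" by (simp add: compose_metric_def)
    moreover have "bdd_below (range (\<lambda>y. d x y + d' y x))"
      by (rule bdd_belowI[of _ 0]) (auto intro: add_nonneg_nonneg g(1) d'nn)
    ultimately obtain y where "d x y + d' y x < L" by (auto simp: cINF_less_iff)
    then show ?thesis using d'nn[where x=x and y=y] by (intro exI[of _ y]) simp
  qed
  define f where "f x = (SOME y. d x y < L)" for x
  have fL: "d x (f x) < L" for x unfolding f_def using someI_ex[OF ex[of x]] .
  define B where "B = max L 1"
  have fB: "d x (f x) \<le> B" for x using fL[of x] unfolding B_def by simp
  have B1: "B \<ge> 1" unfolding B_def by simp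
  have ai: "almost_isometry dX dY f (2*B)"
    unfolding almost_isometry_def
  proof (intro conjI allI)
    show "0 < 2*B" using B1 by simp
    fix x x'
    show "dX x x' - 2 * B \<le> dY (f x) (f x')"
      using g(5)[of x x' "f x"] g(4)[of x' "f x" "f x'"] fB[of x] fB[of x'] dYs[of "f x" "f x'"] by linarith
    show "dY (f x) (f x') \<le> dX x x' + 2 * B"
      using g(2)[where x=x and y="f x" and y'="f x'"] g(3)[where x=x and x'=x' and y="f x'"] fB[of x] fB[of x'] by linarith
  qed
  have "\<bar>d x y - d_f dX dY f (2*B) x y\<bar> \<le> 2*B" for x y
  proof -
    have bb: "bdd_below (range (\<lambda>x'. dX x x' + 2*B/2 + dY (f x') y))"
      by (rule bdd_belowI[of _ 0]) (use dXnn dYnn B1 in \<open>auto intro: add_nonneg_nonneg\<close>)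
    have lo: "d x y \<le> d_f dX dY f (2*B) x y"
      unfolding d_f_def
    proof (rule cINF_greatest)
      fix x' show "d x y \<le> dX x x' + 2*B/2 + dY (f x') y"
        using g(3)[where x=x and x'=x' and y=y] g(4)[where x=x' and y=y and y'="f x'"] fB[of x'] by linarith
    qed simp
    have "d_f dX dY f (2*B) x y \<le> dX x x + 2*B/2 + dY (f x) y"
      unfolding d_f_def by (rule cINF_lower[OF bb]) simp
    then have hi: "d_f dX dY f (2*B) x y \<le> d x y + 2*B"
      using dX0[of x] g(2)[where x=x and y="f x" and y'=y] fB[of x] by linarith
    show ?thesis using lo hi by linarith
  qed
  then show ?thesis using ai by blast
qed

end
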